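(* Let $B$ be a finite set and $\gamma\subseteq B^2$ a binary relation such that for some $0,1\in B$ we have $(0,1),(0,0),(1,1)\in\gamma$ and $(1,0)\notin\gamma$. Let $\mathbf B=(B;\gamma)$. Then $\mathrm{CSP}(\mathbf B)$ is not constant-query testable (even with two-sided error).
   Context: $\mathrm{CSP}(\mathbf B)$: instances $(V,\mathcal C,w)$ with constraints $\langle(x,y),\gamma\rangle$, $x,y\in V$, and weights $w:V\to[0,1]$ summing to 1; an assignment $f:V\to B$ is satisfying if $(f(x),f(y))\in\gamma$ for all constraints. $\mathrm{dist}_{\mathcal I}(f)$ is the minimum total weight of variables where $f$ differs from a satisfying assignment; $f$ is $\epsilon$-far if $\mathrm{dist}_{\mathcal I}(f)>\epsilon$. An $\epsilon$-tester gets the instance and $\epsilon$ in full, queries values of $f$, accepts satisfying $f$ with probability $\ge 2/3$ and rejects $\epsilon$-far $f$ with probability $\ge2/3$. Constant-query testable means: for every $\epsilon\in(0,1)$ there is an $\epsilon$-tester whose number of queries is bounded by a function of $\epsilon$ alone, independent of the number $n=|V|$ of variables. *)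

theory Defs
  imports "HOL-Probability.Probability"
begin

text \<open>An instance is (V, C, w): a finite variable set V (variables are natural numbers),
  a set C of scopes (x,y) (each standing for the constraint <(x,y),gamma>), and weights w.\<close>

definition csp_instance :: "nat set \<Rightarrow> (nat \<times> nat) set \<Rightarrow> (nat \<Rightarrow> real) \<Rightarrow> bool" where
  "csp_instance V C w \<longleftrightarrow> finite V \<and> C \<subseteq> V \<times> V \<and>
     (\<forall>x\<in>V. 0 \<le> w x \<and> w x \<le> 1) \<and> (\<Sum>x\<in>V. w x) = 1"

definition is_assignment :: "'b set \<Rightarrow> nat set \<Rightarrow> (nat \<Rightarrow> 'b) \<Rightarrow> bool" where
  "is_assignment B V f \<longleftrightarrow> (\<forall>x\<in>V. f x \<in> B)"

definition satisfying :: "'b set \<Rightarrow> ('b \<times> 'b) set \<Rightarrow> nat set \<Rightarrow> (nat \<times> nat) set \<Rightarrow> (nat \<Rightarrow> 'b) \<Rightarrow> bool" where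
  "satisfying B \<gamma> V C f \<longleftrightarrow> is_assignment B V f \<and> (\<forall>(x,y)\<in>C. (f x, f y) \<in> \<gamma>)"

definition csp_dist :: "'b set \<Rightarrow> ('b \<times> 'b) set \<Rightarrow> nat set \<Rightarrow> (nat \<times> nat) set \<Rightarrow> (nat \<Rightarrow> real)
    \<Rightarrow> (nat \<Rightarrow> 'b) \<Rightarrow> real" where
  "csp_dist B \<gamma> V C w f = Inf {(\<Sum>x\<in>{x\<in>V. f x \<noteq> g x}. w x) | g. satisfying B \<gamma> V C g}"

definition eps_far :: "'b set \<Rightarrow> ('b \<times> 'b) set \<Rightarrow> nat set \<Rightarrow> (nat \<times> nat) set \<Rightarrow> (nat \<Rightarrow> real)
    \<Rightarrow> real \<Rightarrow> (nat \<Rightarrow> 'b) \<Rightarrow> bool" where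
  "eps_far B \<gamma> V C w \<epsilon> f \<longleftrightarrow> csp_dist B \<gamma> V C w f > \<epsilon>"

text \<open>Deterministic adaptive query algorithms: decision trees that query a variable and
  branch on its value; leaves output accept (True) / reject (False).  A randomized
  tester is a probability distribution over such trees.\<close>
datatype ('v, 'b) qtree = Leaf bool | Query 'v "'b \<Rightarrow> ('v, 'b) qtree"

primrec run_tree :: "('v, 'b) qtree \<Rightarrow> ('v \<Rightarrow> 'b) \<Rightarrow> bool" where
  "run_tree (Leaf r) f = r"
| "run_tree (Query x k) f = run_tree (k (f x)) f"

primrec valid_tree :: "'v set \<Rightarrow> 'b set \<Rightarrow> ('v, 'b) qtree \<Rightarrow> nat \<Rightarrow> bool" where
  "valid_tree V B (Leaf r) q = True"
| "valid_tree V B (Query x k) q = (0 < q \<and> x \<in> V \<and> (\<forall>b\<in>B. valid_tree V B (k b) (q - 1)))"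

definition accept_prob :: "(nat, 'b) qtree pmf \<Rightarrow> (nat \<Rightarrow> 'b) \<Rightarrow> real" where
  "accept_prob T f = measure_pmf.prob T {t. run_tree t f}"

definition is_tester :: "'b set \<Rightarrow> ('b \<times> 'b) set \<Rightarrow> nat set \<Rightarrow> (nat \<times> nat) set \<Rightarrow> (nat \<Rightarrow> real)
    \<Rightarrow> real \<Rightarrow> nat \<Rightarrow> (nat, 'b) qtree pmf \<Rightarrow> bool" where
  "is_tester B \<gamma> V C w \<epsilon> q T \<longleftrightarrow>
     (\<forall>t\<in>set_pmf T. valid_tree V B t q) \<and>
     (\<forall>f. satisfying B \<gamma> V C f \<longrightarrow> accept_prob T f \<ge> 2/3) \<and>
     (\<forall>f. is_assignment B V f \<and> eps_far B \<gamma> V C w \<epsilon> f \<longrightarrow> 1 - accept_prob T f \<ge> 2/3)"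

definition constant_query_testable :: "'b set \<Rightarrow> ('b \<times> 'b) set \<Rightarrow> bool" where
  "constant_query_testable B \<gamma> \<longleftrightarrow>
     (\<forall>\<epsilon>::real. 0 < \<epsilon> \<and> \<epsilon> < 1 \<longrightarrow>
        (\<exists>q::nat. \<forall>V C w. csp_instance V C w \<longrightarrow> (\<exists>T. is_tester B \<gamma> V C w \<epsilon> q T)))"

end

theory Submission
  imports Defs "HOL-Library.Nat_Bijection"
begin


lemma avg:
  fixes T :: "'t pmf" and \<Omega> :: "'w set" and P Q :: "'w \<Rightarrow> 't \<Rightarrow> bool" and K :: nat
  assumes fin: "finite \<Omega>"
    and bd: "\<forall>tr\<in>set_pmf T. card {\<omega>\<in>\<Omega>. P \<omega> tr} \<le> card {\<omega>\<in>\<Omega>. Q \<omega> tr} + K"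
  shows "(\<Sum>\<omega>\<in>\<Omega>. measure_pmf.prob T {tr. P \<omega> tr}) \<le> (\<Sum>\<omega>\<in>\<Omega>. measure_pmf.prob T {tr. Q \<omega> tr}) + K"
proof -
  have pr: "measure_pmf.prob T {tr. R tr} = measure_pmf.expectation T (indicator {tr. R tr})" for R :: "'t \<Rightarrow> bool"
    by (simp add: integral_indicator)
  have int: "integrable (measure_pmf T) (indicat_real X)" for X :: "'t set"
    by (rule measure_pmf.integrable_const_bound[where B=1]) (auto simp: indicator_def)
  have cnt: "(\<Sum>\<omega>\<in>\<Omega>. indicat_real {tr. R \<omega> tr} tr) = real (card {\<omega>\<in>\<Omega>. R \<omega> tr})" for R :: "'w \<Rightarrow> 't \<Rightarrow> bool" and tr
    using fin by (simp add: indicator_def sum.If_cases Int_def)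
  have intc: "integrable (measure_pmf T) (\<lambda>tr. real (card {\<omega>\<in>\<Omega>. R \<omega> tr}))" for R
  proof -
    have "integrable (measure_pmf T) (\<lambda>tr. \<Sum>\<omega>\<in>\<Omega>. indicat_real {tr. R \<omega> tr} tr)"
      using int by auto
    then show ?thesis using cnt by simp
  qed
  have e: "(\<Sum>\<omega>\<in>\<Omega>. measure_pmf.prob T {tr. R \<omega> tr}) = measure_pmf.expectation T (\<lambda>tr. real (card {\<omega>\<in>\<Omega>. R \<omega> tr}))" for R
  proof -
    have "(\<Sum>\<omega>\<in>\<Omega>. measure_pmf.prob T {tr. R \<omega> tr}) = (\<Sum>\<omega>\<in>\<Omega>. measure_pmf.expectation T (indicator {tr. R \<omega> tr}))"
      using pr by simp
    also have "\<dots> = measure_pmf.expectation T (\<lambda>tr. \<Sum>\<omega>\<in>\<Omega>. indicat_real {tr. R \<omega> tr} tr)"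
      using Bochner_Integration.integral_sum[where I=\<Omega> and M="measure_pmf T" and f="\<lambda>\<omega>. indicat_real {tr. R \<omega> tr}"] int by simp
    also have "\<dots> = measure_pmf.expectation T (\<lambda>tr. real (card {\<omega>\<in>\<Omega>. R \<omega> tr}))"
      using cnt by simp
    finally show ?thesis .
  qed
  have "measure_pmf.expectation T (\<lambda>tr. real (card {\<omega>\<in>\<Omega>. P \<omega> tr}))
      \<le> measure_pmf.expectation T (\<lambda>tr. real (card {\<omega>\<in>\<Omega>. Q \<omega> tr}) + real K)"
    apply (rule integral_mono_AE)
    using intc apply simp
    using intc apply simp
    apply (rule AE_pmfI) using bd by (metis of_nat_add of_nat_le_iff)
  also have "\<dots> = measure_pmf.expectation T (\<lambda>tr. real (card {\<omega>\<in>\<Omega>. Q \<omega> tr})) + real K"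
    using Bochner_Integration.integral_add[OF intc[of Q] measure_pmf.integrable_const[of T "real K"]] by simp
  finally show ?thesis using e[of P] e[of Q] by simp
qed
definition enc :: "nat \<Rightarrow> nat set \<Rightarrow> nat" where "enc c x = 4 * set_encode x + c"
definition dc :: "nat \<Rightarrow> nat" where "dc v = v mod 4"
definition dx :: "nat \<Rightarrow> nat set" where "dx v = set_decode (v div 4)"

lemma dc_enc[simp]: "c < 4 \<Longrightarrow> dc (enc c x) = c"
  unfolding dc_def enc_def by simp
lemma dx_enc[simp]: "c < 4 \<Longrightarrow> finite x \<Longrightarrow> dx (enc c x) = x"
  unfolding dx_def enc_def by (simp add: set_encode_inverse)

lemma enc_inj: "c < 4 \<Longrightarrow> c' < 4 \<Longrightarrow> finite x \<Longrightarrow> finite x' \<Longrightarrow> enc c x = enc c' x' \<Longrightarrow> c = c' \<and> x = x'"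
  by (metis dc_enc dx_enc)

definition lab :: "'b \<Rightarrow> 'b \<Rightarrow> bool \<Rightarrow> 'b" where "lab a0 a1 b = (if b then a1 else a0)"

definition F :: "'b \<Rightarrow> 'b \<Rightarrow> bool \<Rightarrow> nat \<Rightarrow> nat set set \<Rightarrow> nat \<Rightarrow> 'b" where
  "F a0 a1 s i A v = (let c = dc v; x = dx v in
     if c = 0 then (if i \<notin> x then lab a0 a1 (x \<in> A) else a0)
     else if c = 1 then (if i \<in> x then lab a0 a1 ((x - {i} \<in> A) = s) else a1)
     else if c = 2 then (if i \<notin> x then lab a0 a1 (x \<notin> A) else a0)
     else (if i \<in> x then lab a0 a1 ((x - {i} \<in> A) \<noteq> s) else a1))"

lemma F_range: "F a0 a1 s i A v \<in> {a0, a1}"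
  unfolding F_def lab_def Let_def by auto

definition Vt :: "nat \<Rightarrow> nat set" where
  "Vt t = (\<lambda>(c,x). enc c x) ` ({..<4} \<times> Pow {..<t})"

definition Ct :: "nat \<Rightarrow> (nat \<times> nat) set" where
  "Ct t = {(enc 0 x, enc 1 (insert j x)) | x j. x \<subseteq> {..<t} \<and> j < t \<and> j \<notin> x}
        \<union> {(enc 2 x, enc 3 (insert j x)) | x j. x \<subseteq> {..<t} \<and> j < t \<and> j \<notin> x}"

lemma finite_Vt: "finite (Vt t)" unfolding Vt_def by auto

lemma card_Vt: "card (Vt t) = 4 * 2^t"
proof -
  have "inj_on (\<lambda>(c,x). enc c x) ({..<4} \<times> Pow {..<t})"
  proof (rule inj_onI)
    fix p p' assume p: "p \<in> {..<4::nat} \<times> Pow {..<t}" and p': "p' \<in> {..<4::nat} \<times> Pow {..<t}"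
      and e: "(\<lambda>(c,x). enc c x) p = (\<lambda>(c,x). enc c x) p'"
    obtain c x where cx: "p = (c,x)" by (cases p)
    obtain c' x' where cx': "p' = (c',x')" by (cases p')
    have "finite x" "finite x'" using p p' cx cx' finite_subset by auto
    then show "p = p'" using enc_inj[of c c' x x'] p p' e cx cx' by auto
  qed
  then have "card (Vt t) = card ({..<4::nat} \<times> Pow {..<t})"
    unfolding Vt_def by (rule card_image)
  also have "\<dots> = 4 * 2^t" by (simp add: card_cartesian_product card_Pow)
  finally show ?thesis .
qed

lemma Vt_dx: "v \<in> Vt t \<Longrightarrow> dx v \<subseteq> {..<t}"
proof -
  assume "v \<in> Vt t"
  then obtain c x where "v = enc c x" "c < 4" "x \<subseteq> {..<t}" unfolding Vt_def by auto
  moreover then have "finite x" using finite_subset by blast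
  ultimately show ?thesis by simp
qed

lemma enc_Vt: "c < 4 \<Longrightarrow> x \<subseteq> {..<t} \<Longrightarrow> enc c x \<in> Vt t"
  unfolding Vt_def by (rule image_eqI[where x="(c,x)"]) auto

lemma Ct_sub: "Ct t \<subseteq> Vt t \<times> Vt t"
  unfolding Ct_def by (auto intro!: enc_Vt)

primrec Qs :: "('v, 'b) qtree \<Rightarrow> 'b \<Rightarrow> 'b \<Rightarrow> 'v set" where
  "Qs (Leaf r) a0 a1 = {}"
| "Qs (Query x k) a0 a1 = insert x (Qs (k a0) a0 a1 \<union> Qs (k a1) a0 a1)"

lemma run_eq: "(\<forall>v. f v \<in> {a0, a1}) \<Longrightarrow> (\<forall>v\<in>Qs tr a0 a1. f v = g v) \<Longrightarrow> run_tree tr f = run_tree tr g"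
proof (induction tr)
  case (Leaf r) then show ?case by simp
next
  case (Query x k)
  have fx: "f x = g x" using Query.prems by simp
  have "f x = a0 \<or> f x = a1" using Query.prems(1) by auto
  then show ?case
  proof
    assume h: "f x = a0"
    have "run_tree (k a0) f = run_tree (k a0) g"
      by (rule Query.IH) (use Query.prems in auto)
    then show ?thesis using h fx by simp
  next
    assume h: "f x = a1"
    have "run_tree (k a1) f = run_tree (k a1) g"
      by (rule Query.IH) (use Query.prems in auto)
    then show ?thesis using h fx by simp
  qed
qed

lemma Qs_valid: "valid_tree V B tr q \<Longrightarrow> a0 \<in> B \<Longrightarrow> a1 \<in> B \<Longrightarrow>
   Qs tr a0 a1 \<subseteq> V \<and> finite (Qs tr a0 a1) \<and> card (Qs tr a0 a1) + 1 \<le> 2^q"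
proof (induction tr arbitrary: q)
  case (Leaf r) then show ?case by simp
next
  case (Query x k)
  from Query.prems have q: "0 < q" and xV: "x \<in> V" and vz: "valid_tree V B (k a0) (q-1)" and vo: "valid_tree V B (k a1) (q-1)"
    by auto
  have A: "Qs (k a0) a0 a1 \<subseteq> V \<and> finite (Qs (k a0) a0 a1) \<and> card (Qs (k a0) a0 a1) + 1 \<le> 2^(q-1)"
    by (rule Query.IH) (use vz Query.prems in auto)
  have Bo: "Qs (k a1) a0 a1 \<subseteq> V \<and> finite (Qs (k a1) a0 a1) \<and> card (Qs (k a1) a0 a1) + 1 \<le> 2^(q-1)"
    by (rule Query.IH) (use vo Query.prems in auto)
  have "card (Qs (Query x k) a0 a1) \<le> 1 + card (Qs (k a0) a0 a1 \<union> Qs (k a1) a0 a1)"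
    by (simp add: card_insert_le_m1 card_insert_if)
  also have "\<dots> \<le> 1 + card (Qs (k a0) a0 a1) + card (Qs (k a1) a0 a1)"
    using card_Un_le by simp
  finally have c: "card (Qs (Query x k) a0 a1) \<le> 1 + card (Qs (k a0) a0 a1) + card (Qs (k a1) a0 a1)" .
  have "(2::nat)^q = 2 * 2^(q-1)" using q by (cases q) auto
  then show ?case using A Bo c xV by auto
qed



lemma F_enc0: "finite x \<Longrightarrow> F a0 a1 s i A (enc 0 x) = (if i \<notin> x then lab a0 a1 (x \<in> A) else a0)"
  by (simp add: F_def Let_def)
lemma F_enc1: "finite x \<Longrightarrow> F a0 a1 s i A (enc 1 x) = (if i \<in> x then lab a0 a1 ((x - {i} \<in> A) = s) else a1)"
  by (simp add: F_def Let_def)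
lemma F_enc1': "finite x \<Longrightarrow> F a0 a1 s i A (enc (Suc 0) x) = (if i \<in> x then lab a0 a1 ((x - {i} \<in> A) = s) else a1)"
  by (simp add: F_def Let_def)
lemma F_enc2: "finite x \<Longrightarrow> F a0 a1 s i A (enc 2 x) = (if i \<notin> x then lab a0 a1 (x \<notin> A) else a0)"
  by (simp add: F_def Let_def)
lemma F_enc3: "finite x \<Longrightarrow> F a0 a1 s i A (enc 3 x) = (if i \<in> x then lab a0 a1 ((x - {i} \<in> A) \<noteq> s) else a1)"
  by (simp add: F_def Let_def)

lemma yes_sat:
  assumes g01: "(a0,a1)\<in>\<gamma>" and g00: "(a0,a0)\<in>\<gamma>" and g11: "(a1,a1)\<in>\<gamma>"
    and B: "a0 \<in> B" "a1 \<in> B"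
  shows "satisfying B \<gamma> (Vt t) (Ct t) (F a0 a1 True i A)"
  unfolding satisfying_def
proof (intro conjI)
  show "is_assignment B (Vt t) (F a0 a1 True i A)"
    unfolding is_assignment_def proof
      fix v show "F a0 a1 True i A v \<in> B" using F_range[of a0 a1 True i A v] B by auto
    qed
  have ok: "(a,b) \<in> \<gamma>" if "a \<in> {a0,a1}" "b \<in> {a0,a1}" "a = a0 \<or> b = a1" for a b
    using that g01 g00 g11 by auto
  show "\<forall>(p,q)\<in>Ct t. (F a0 a1 True i A p, F a0 a1 True i A q) \<in> \<gamma>"
  proof (clarify)
    fix p q assume "(p,q) \<in> Ct t"
    then obtain x j c where x: "x \<subseteq> {..<t}" "j < t" "j \<notin> x" and c: "c = 0 \<or> c = 2"
      and pq: "p = enc c x" "q = enc (c + 1) (insert j x)"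
    proof -
      from \<open>(p,q) \<in> Ct t\<close> show thesis unfolding Ct_def
      proof (elim UnE CollectE exE conjE)
        fix x j assume "(p,q) = (enc 0 x, enc 1 (insert j x))" "x \<subseteq> {..<t}" "j < t" "j \<notin> x"
        then show thesis using that[of x j 0] by simp
      next
        fix x j assume "(p,q) = (enc 2 x, enc 3 (insert j x))" "x \<subseteq> {..<t}" "j < t" "j \<notin> x"
        then show thesis using that[of x j 2] by simp
      qed
    qed
    have fx: "finite x" using x(1) by (rule finite_subset) simp
    show "(F a0 a1 True i A p, F a0 a1 True i A q) \<in> \<gamma>"
    proof (cases "i = j")
      case True
      then have "insert j x - {i} = x" using x by auto
      then have e: "insert i x - {i} = x" "i \<in> insert i x" "i \<notin> x" using True x by auto
      have l: "(lab a0 a1 b, lab a0 a1 b) \<in> \<gamma>" for b using g00 g11 by (simp add: lab_def)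
      from c show ?thesis
      proof
        assume "c = 0"
        then show ?thesis using pq fx e l True by (simp add: F_enc0 F_enc1')
      next
        assume "c = 2"
        then show ?thesis using pq fx e l True by (simp add: F_enc2 F_enc3)
      qed
    next
      case False
      have r1: "F a0 a1 True i A p \<in> {a0,a1}" by (rule F_range)
      have r2: "F a0 a1 True i A q \<in> {a0,a1}" by (rule F_range)
      have ij: "(i \<in> insert j x) = (i \<in> x)" using False by simp
      have r3: "F a0 a1 True i A p = a0 \<or> F a0 a1 True i A q = a1"
      proof (cases "i \<in> x")
        case True
        then have "F a0 a1 True i A p = a0" using c pq fx by (auto simp: F_enc0 F_enc2)
        then show ?thesis ..
      next
        case False
        then have "F a0 a1 True i A q = a1" using c pq fx ij by (auto simp: F_enc1' F_enc3)
        then show ?thesis ..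
      qed
      show ?thesis using ok[OF r1 r2 r3] .
    qed
  qed
qed

lemma card_P: "i < t \<Longrightarrow> card (Pow ({..<t} - {i})) = 2^(t-1)"
  by (simp add: card_Pow)

lemma no_far:
  assumes g01: "(a0,a1)\<in>\<gamma>" and g00: "(a0,a0)\<in>\<gamma>" and g11: "(a1,a1)\<in>\<gamma>"
    and g10: "(a1,a0) \<notin> \<gamma>"
    and B: "a0 \<in> B" "a1 \<in> B" and it: "i < t"
  shows "csp_dist B \<gamma> (Vt t) (Ct t) (\<lambda>v. 1/(4*2^t)) (F a0 a1 False i A) \<ge> 1/8"
  unfolding csp_dist_def
proof (rule cInf_greatest)
  show "{\<Sum>x\<in>{x \<in> Vt t. F a0 a1 False i A x \<noteq> g x}. (1::real) / (4 * 2 ^ t) |g. satisfying B \<gamma> (Vt t) (Ct t) g} \<noteq> {}"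
  proof -
    have "(\<Sum>x\<in>{x \<in> Vt t. F a0 a1 False i A x \<noteq> F a0 a1 True i A x}. (1::real) / (4 * 2 ^ t)) \<in> {\<Sum>x\<in>{x \<in> Vt t. F a0 a1 False i A x \<noteq> g x}. (1::real) / (4 * 2 ^ t) |g. satisfying B \<gamma> (Vt t) (Ct t) g}"
      using yes_sat[OF g01 g00 g11 B, of t i A] by auto
    then show ?thesis by auto
  qed
next
  fix s assume "s \<in> {\<Sum>x\<in>{x \<in> Vt t. F a0 a1 False i A x \<noteq> g x}. (1::real) / (4 * 2 ^ t) |g. satisfying B \<gamma> (Vt t) (Ct t) g}"
  then obtain h where h: "satisfying B \<gamma> (Vt t) (Ct t) h"
    and s: "s = (\<Sum>x\<in>{x \<in> Vt t. F a0 a1 False i A x \<noteq> h x}. (1::real) / (4 * 2 ^ t))" by auto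
  define G where "G = F a0 a1 False i A"
  define D where "D = {x \<in> Vt t. G x \<noteq> h x}"
  define P where "P = Pow ({..<t} - {i})"
  define pp where "pp x = (if x \<in> A then enc 0 x else enc 2 x)" for x
  define qq where "qq x = (if x \<in> A then enc 1 (insert i x) else enc 3 (insert i x))" for x
  define \<phi> where "\<phi> x = (if h (pp x) \<noteq> G (pp x) then pp x else qq x)" for x
  have props: "pp x \<in> Vt t \<and> qq x \<in> Vt t \<and> (pp x, qq x) \<in> Ct t \<and> G (pp x) = a1 \<and> G (qq x) = a0
      \<and> dx (pp x) = x \<and> dx (qq x) = insert i x" if "x \<in> P" for x
  proof -
    have x: "x \<subseteq> {..<t}" "i \<notin> x" using that unfolding P_def by auto
    have fx: "finite x" using x(1) by (rule finite_subset) simp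
    have ix: "insert i x \<subseteq> {..<t}" using x it by auto
    have c0: "(enc 0 x, enc 1 (insert i x)) \<in> Ct t" unfolding Ct_def using x it by blast
    have c2: "(enc 2 x, enc 3 (insert i x)) \<in> Ct t" unfolding Ct_def using x it by blast
    have ct: "(pp x, qq x) \<in> Ct t" unfolding pp_def qq_def using c0 c2 by simp
    have fi: "finite (insert i x)" using fx by simp
    have d: "insert i x - {i} = x" using x by auto
    show ?thesis
    proof (cases "x \<in> A")
      case True
      then show ?thesis using ct x fx fi ix d
        by (simp add: pp_def qq_def G_def F_enc0 F_enc1' lab_def enc_Vt)
    next
      case False
      then show ?thesis using ct x fx fi ix d
        by (simp add: pp_def qq_def G_def F_enc2 F_enc3 lab_def enc_Vt)
    qed
  qed
  have inD: "\<phi> x \<in> D" if "x \<in> P" for x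
  proof -
    note pr = props[OF that]
    have "(h (pp x), h (qq x)) \<in> \<gamma>" using h pr unfolding satisfying_def by auto
    then have "h (pp x) \<noteq> G (pp x) \<or> h (qq x) \<noteq> G (qq x)" using pr g10 by auto
    then show ?thesis unfolding D_def \<phi>_def using pr by auto
  qed
  have inj: "inj_on \<phi> P"
  proof (rule inj_onI)
    fix x y assume x: "x \<in> P" and y: "y \<in> P" and e: "\<phi> x = \<phi> y"
    have key: "dx (\<phi> z) - {i} = z" if z: "z \<in> P" for z
    proof -
      have iz: "i \<notin> z" using z unfolding P_def by blast
      have e1: "dx (pp z) = z" using props[OF z] by blast
      have e2: "dx (qq z) = insert i z" using props[OF z] by blast
      have d1: "dx (pp z) - {i} = z" using iz by (simp only: e1) blast
      have d2: "dx (qq z) - {i} = z" using iz by (simp only: e2) blast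
      have "\<phi> z = pp z \<or> \<phi> z = qq z" unfolding \<phi>_def by simp
      then show ?thesis using d1 d2 by (elim disjE) simp_all
    qed
    have "x = dx (\<phi> x) - {i}" using key[OF x] by simp
    also have "\<dots> = dx (\<phi> y) - {i}" using e by simp
    also have "\<dots> = y" using key[OF y] .
    finally show "x = y" .
  qed
  have fD: "finite D" unfolding D_def using finite_Vt by auto
  have "card P \<le> card D"
    using card_inj_on_le[OF inj _ fD] inD by blast
  then have cD: "2^(t-1) \<le> card D" using card_P[OF it] unfolding P_def by simp
  have t2: "(2::real)^t = 2 * 2^(t-1)" using it by (cases t) auto
  have "s = real (card D) / (4 * 2^t :: real)" using s unfolding D_def G_def by simp
  also have "\<dots> \<ge> 2^(t-1) / (4 * 2^t)"
  proof (rule divide_right_mono)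
    have "real (2^(t-1)) \<le> real (card D)" using cD by (simp only: of_nat_le_iff)
    then show "(2::real)^(t-1) \<le> real (card D)" by simp
  qed simp
  finally show "1/8 \<le> s" using t2 by (simp add: field_simps)
qed




lemma good_eq:
  assumes S: "S \<subseteq> Vt t"
    and nb: "\<not>(\<exists>v\<in>S. \<exists>u\<in>S. dx u = insert i (dx v) \<and> i \<notin> dx v)"
    and R: "R = {x \<in> Pow {..<t}. \<exists>u\<in>S. i \<in> dx u \<and> x = dx u - {i}}"
    and v: "v \<in> S"
  shows "F a0 a1 True i ((A - R) \<union> (R - A)) v = F a0 a1 False i A v"
proof -
  define x where "x = dx v"
  have xt: "x \<subseteq> {..<t}" using Vt_dx S v unfolding x_def by blast
  show ?thesis
  proof (cases "i \<in> x")
    case False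
    have "x \<notin> R"
    proof
      assume "x \<in> R"
      then obtain u where u: "u \<in> S" "i \<in> dx u" "x = dx u - {i}" unfolding R by blast
      then have "dx u = insert i (dx v)" unfolding x_def by blast
      then show False using nb u(1) v False unfolding x_def by blast
    qed
    then have m: "(x \<in> (A - R) \<union> (R - A)) = (x \<in> A)" by blast
    show ?thesis using False m unfolding F_def Let_def x_def[symmetric] by simp
  next
    case True
    have "x - {i} \<in> R" unfolding R using xt v True unfolding x_def by blast
    then have m: "(x - {i} \<in> (A - R) \<union> (R - A)) = (x - {i} \<notin> A)" by blast
    show ?thesis using True m unfolding F_def Let_def x_def[symmetric] by simp
  qed
qed

lemma count_i:
  assumes QS: "Qs tr a0 a1 \<subseteq> Vt t"
    and nb: "\<not>(\<exists>v\<in>Qs tr a0 a1. \<exists>u\<in>Qs tr a0 a1. dx u = insert i (dx v) \<and> i \<notin> dx v)"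
  shows "card {A \<in> Pow (Pow {..<t}). run_tree tr (F a0 a1 True i A)}
       \<le> card {A \<in> Pow (Pow {..<t}). run_tree tr (F a0 a1 False i A)}"
proof -
  define S where "S = Qs tr a0 a1"
  define R where "R = {x \<in> Pow {..<t}. \<exists>u\<in>S. i \<in> dx u \<and> x = dx u - {i}}"
  define \<phi> where "\<phi> A = (A - R) \<union> (R - A)" for A :: "nat set set"
  define Y where "Y = {A \<in> Pow (Pow {..<t}). run_tree tr (F a0 a1 True i A)}"
  define N where "N = {A \<in> Pow (Pow {..<t}). run_tree tr (F a0 a1 False i A)}"
  have RP: "R \<subseteq> Pow {..<t}" unfolding R_def by blast
  have runeq: "run_tree tr (F a0 a1 True i (\<phi> A)) = run_tree tr (F a0 a1 False i A)" for A
  proof (rule run_eq)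
    show "\<forall>v. F a0 a1 True i (\<phi> A) v \<in> {a0, a1}" by (rule allI, rule F_range)
    show "\<forall>v\<in>Qs tr a0 a1. F a0 a1 True i (\<phi> A) v = F a0 a1 False i A v"
    proof
      fix v assume "v \<in> Qs tr a0 a1"
      then show "F a0 a1 True i (\<phi> A) v = F a0 a1 False i A v"
        unfolding \<phi>_def by (rule good_eq[OF QS nb R_def[unfolded S_def]])
    qed
  qed
  have "Y \<subseteq> \<phi> ` N"
  proof
    fix A assume A: "A \<in> Y"
    have inv: "\<phi> (\<phi> A) = A" unfolding \<phi>_def by blast
    have "\<phi> A \<in> Pow (Pow {..<t})" using A RP unfolding Y_def \<phi>_def by blast
    moreover have "run_tree tr (F a0 a1 False i (\<phi> A))"
      using runeq[of "\<phi> A"] inv A unfolding Y_def by simp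
    ultimately have "\<phi> A \<in> N" unfolding N_def by blast
    then show "A \<in> \<phi> ` N" using inv by (metis image_eqI)
  qed
  moreover have "finite N" unfolding N_def by simp
  ultimately have "card Y \<le> card N"
    by (meson card_image_le card_mono finite_imageI le_trans)
  then show ?thesis unfolding Y_def N_def .
qed

lemma count_all:
  assumes QS: "Qs tr a0 a1 \<subseteq> Vt t" and fQ: "finite (Qs tr a0 a1)"
  shows "card {\<omega> \<in> {..<t} \<times> Pow (Pow {..<t}). run_tree tr (F a0 a1 True (fst \<omega>) (snd \<omega>))}
    \<le> card {\<omega> \<in> {..<t} \<times> Pow (Pow {..<t}). run_tree tr (F a0 a1 False (fst \<omega>) (snd \<omega>))}
       + card (Qs tr a0 a1) * card (Qs tr a0 a1) * card (Pow (Pow {..<t::nat}))"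
proof -
  define S where "S = Qs tr a0 a1"
  define PP where "PP = Pow (Pow {..<t::nat})"
  define M where "M = card PP"
  define bad where "bad i = (\<exists>v\<in>S. \<exists>u\<in>S. dx u = insert i (dx v) \<and> i \<notin> dx v)" for i
  define c where "c s i = card {A \<in> PP. run_tree tr (F a0 a1 s i A)}" for s i
  have fPP: "finite PP" unfolding PP_def by simp
  have split: "card {\<omega> \<in> {..<t} \<times> PP. run_tree tr (F a0 a1 s (fst \<omega>) (snd \<omega>))} = (\<Sum>i<t. c s i)" for s
  proof -
    have "{\<omega> \<in> {..<t} \<times> PP. run_tree tr (F a0 a1 s (fst \<omega>) (snd \<omega>))}
        = (SIGMA i:{..<t}. {A \<in> PP. run_tree tr (F a0 a1 s i A)})" by auto
    then show ?thesis unfolding c_def using fPP by simp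
  qed
  have pt: "c True i \<le> c False i + (if bad i then M else 0)" for i
  proof (cases "bad i")
    case True
    have "c True i \<le> M" unfolding c_def M_def by (rule card_mono[OF fPP]) blast
    then show ?thesis using True by simp
  next
    case False
    then show ?thesis using count_i[OF QS, of i] unfolding c_def PP_def bad_def S_def by simp
  qed
  have "(\<Sum>i<t. c True i) \<le> (\<Sum>i<t. c False i + (if bad i then M else 0))"
    by (rule sum_mono) (rule pt)
  also have "\<dots> = (\<Sum>i<t. c False i) + (\<Sum>i<t. (if bad i then M else 0))"
    by (rule sum.distrib)
  also have "(\<Sum>i<t. (if bad i then M else 0)) = card {i \<in> {..<t}. bad i} * M"
    by (simp add: sum.If_cases Int_def)
  also have "card {i \<in> {..<t}. bad i} \<le> card S * card S"
  proof -
    define X where "X = (\<lambda>(v,u). dx u - dx v) ` (S \<times> S)"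
    have sub: "(\<lambda>i. {i}) ` {i \<in> {..<t}. bad i} \<subseteq> X"
    proof
      fix y assume "y \<in> (\<lambda>i. {i}) ` {i \<in> {..<t}. bad i}"
      then obtain i where y: "y = {i}" and b: "bad i" by blast
      then obtain v u where vu: "v \<in> S" "u \<in> S" "dx u = insert i (dx v)" "i \<notin> dx v"
        unfolding bad_def by blast
      then have "dx u - dx v = {i}" by blast
      then have "y = (\<lambda>(v,u). dx u - dx v) (v,u)" using y by simp
      moreover have "(v,u) \<in> S \<times> S" using vu by simp
      ultimately show "y \<in> X" unfolding X_def by (rule image_eqI)
    qed
    have fX: "finite X" unfolding X_def S_def using fQ by simp
    have "card {i \<in> {..<t}. bad i} = card ((\<lambda>i. {i}) ` {i \<in> {..<t}. bad i})"
      by (rule card_image[symmetric]) (simp add: inj_on_def)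
    also have "\<dots> \<le> card X" by (rule card_mono[OF fX sub])
    also have "\<dots> \<le> card (S \<times> S)" unfolding X_def by (rule card_image_le) (simp add: S_def fQ)
    also have "\<dots> = card S * card S" by (simp add: card_cartesian_product)
    finally show ?thesis .
  qed
  finally have "(\<Sum>i<t. c True i) \<le> (\<Sum>i<t. c False i) + card S * card S * M"
    by (simp add: mult_right_mono)
  then show ?thesis using split[of True] split[of False] unfolding PP_def M_def S_def by simp
qed



theorem mainTheorem10:
  fixes B :: "'b set" and \<gamma> :: "('b \<times> 'b) set" and zero one :: 'b
  assumes "finite B" and "\<gamma> \<subseteq> B \<times> B" and "zero \<in> B" and "one \<in> B"
    and "(zero, one) \<in> \<gamma>" and "(zero, zero) \<in> \<gamma>" and "(one, one) \<in> \<gamma>"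
    and "(one, zero) \<notin> \<gamma>"
  shows "\<not> constant_query_testable B \<gamma>"
proof
  assume ct: "constant_query_testable B \<gamma>"
  note g01 = assms(5) and g00 = assms(6) and g11 = assms(7) and g10 = assms(8)
  note Bz = assms(3) and Bo = assms(4)
  define \<epsilon> :: real where "\<epsilon> = 1/10"
  have "0 < \<epsilon> \<and> \<epsilon> < 1" unfolding \<epsilon>_def by simp
  then obtain q where hq: "\<forall>V C w. csp_instance V C w \<longrightarrow> (\<exists>T. is_tester B \<gamma> V C w \<epsilon> q T)"
    using ct unfolding constant_query_testable_def by blast
  define t where "t = 3 * 4^q + (1::nat)"
  define w where "w = (\<lambda>v::nat. (1::real) / (4 * 2^t))"
  have inst: "csp_instance (Vt t) (Ct t) w"
    unfolding csp_instance_def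
  proof (intro conjI)
    show "finite (Vt t)" by (rule finite_Vt)
    show "Ct t \<subseteq> Vt t \<times> Vt t" by (rule Ct_sub)
    have "(1::real) \<le> 2^t" by simp
    then have "(1::real) \<le> 4 * 2^t" by linarith
    then show "\<forall>x\<in>Vt t. 0 \<le> w x \<and> w x \<le> 1" unfolding w_def by simp
    have "(\<Sum>x\<in>Vt t. w x) = real (card (Vt t)) * (1 / (4 * 2^t))" unfolding w_def by simp
    also have "\<dots> = 1" unfolding card_Vt by simp
    finally show "(\<Sum>x\<in>Vt t. w x) = 1" .
  qed
  then obtain T where T: "is_tester B \<gamma> (Vt t) (Ct t) w \<epsilon> q T" using hq by blast
  define PP where "PP = Pow (Pow {..<t::nat})"
  define \<Omega> where "\<Omega> = {..<t} \<times> PP"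
  define M where "M = card PP"
  have fPP: "finite PP" unfolding PP_def by simp
  have fO: "finite \<Omega>" unfolding \<Omega>_def using fPP by simp
  have cO: "card \<Omega> = t * M" unfolding \<Omega>_def M_def by (simp add: card_cartesian_product)
  have Mpos: "0 < M" unfolding M_def PP_def by (simp add: card_Pow)
  have yes: "accept_prob T (F zero one True (fst \<omega>) (snd \<omega>)) \<ge> 2/3" if "\<omega> \<in> \<Omega>" for \<omega>
    using T yes_sat[OF g01 g00 g11 Bz Bo] unfolding is_tester_def by blast
  have no: "accept_prob T (F zero one False (fst \<omega>) (snd \<omega>)) \<le> 1/3" if om: "\<omega> \<in> \<Omega>" for \<omega>
  proof -
    have it: "fst \<omega> < t" using om unfolding \<Omega>_def by auto
    have d: "csp_dist B \<gamma> (Vt t) (Ct t) w (F zero one False (fst \<omega>) (snd \<omega>)) \<ge> 1/8"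
      unfolding w_def by (rule no_far[OF g01 g00 g11 g10 Bz Bo it])
    have far: "eps_far B \<gamma> (Vt t) (Ct t) w \<epsilon> (F zero one False (fst \<omega>) (snd \<omega>))"
      unfolding eps_far_def \<epsilon>_def using d by simp
    have asg: "is_assignment B (Vt t) (F zero one False (fst \<omega>) (snd \<omega>))"
      unfolding is_assignment_def
    proof
      fix v show "F zero one False (fst \<omega>) (snd \<omega>) v \<in> B"
        using F_range[of zero one False "fst \<omega>" "snd \<omega>" v] Bz Bo by auto
    qed
    have "1 - accept_prob T (F zero one False (fst \<omega>) (snd \<omega>)) \<ge> 2/3"
      using T far asg unfolding is_tester_def by blast
    then show ?thesis by simp
  qed
  have bd: "\<forall>tr\<in>set_pmf T. card {\<omega>\<in>\<Omega>. run_tree tr (F zero one True (fst \<omega>) (snd \<omega>))}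
      \<le> card {\<omega>\<in>\<Omega>. run_tree tr (F zero one False (fst \<omega>) (snd \<omega>))} + 4^q * M"
  proof
    fix tr assume "tr \<in> set_pmf T"
    then have vt: "valid_tree (Vt t) B tr q" using T unfolding is_tester_def by blast
    have Q: "Qs tr zero one \<subseteq> Vt t \<and> finite (Qs tr zero one) \<and> card (Qs tr zero one) + 1 \<le> 2^q"
      by (rule Qs_valid[OF vt Bz Bo])
    have c1: "card (Qs tr zero one) \<le> 2^q" using Q by (metis add_leD1)
    have "card (Qs tr zero one) * card (Qs tr zero one) \<le> 2^q * 2^q"
      by (rule mult_le_mono[OF c1 c1])
    also have "(2::nat)^q * 2^q = 4^q" by (simp add: power_mult_distrib[symmetric])
    finally have c2: "card (Qs tr zero one) * card (Qs tr zero one) * M \<le> 4^q * M" by simp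
    have "card {\<omega>\<in>\<Omega>. run_tree tr (F zero one True (fst \<omega>) (snd \<omega>))}
      \<le> card {\<omega>\<in>\<Omega>. run_tree tr (F zero one False (fst \<omega>) (snd \<omega>))}
         + card (Qs tr zero one) * card (Qs tr zero one) * M"
      using count_all[of tr zero one t] Q unfolding \<Omega>_def M_def PP_def by simp
    then show "card {\<omega>\<in>\<Omega>. run_tree tr (F zero one True (fst \<omega>) (snd \<omega>))}
      \<le> card {\<omega>\<in>\<Omega>. run_tree tr (F zero one False (fst \<omega>) (snd \<omega>))} + 4^q * M"
      using c2 by linarith
  qed
  have main: "(\<Sum>\<omega>\<in>\<Omega>. accept_prob T (F zero one True (fst \<omega>) (snd \<omega>)))
      \<le> (\<Sum>\<omega>\<in>\<Omega>. accept_prob T (F zero one False (fst \<omega>) (snd \<omega>))) + real (4^q * M)"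
    unfolding accept_prob_def by (rule avg[OF fO bd])
  have s1: "real (card \<Omega>) * (2/3) \<le> (\<Sum>\<omega>\<in>\<Omega>. accept_prob T (F zero one True (fst \<omega>) (snd \<omega>)))"
  proof -
    have "(\<Sum>\<omega>\<in>\<Omega>. (2/3::real)) \<le> (\<Sum>\<omega>\<in>\<Omega>. accept_prob T (F zero one True (fst \<omega>) (snd \<omega>)))"
      by (rule sum_mono) (rule yes)
    then show ?thesis by simp
  qed
  have s2: "(\<Sum>\<omega>\<in>\<Omega>. accept_prob T (F zero one False (fst \<omega>) (snd \<omega>))) \<le> real (card \<Omega>) * (1/3)"
  proof -
    have "(\<Sum>\<omega>\<in>\<Omega>. accept_prob T (F zero one False (fst \<omega>) (snd \<omega>))) \<le> (\<Sum>\<omega>\<in>\<Omega>. (1/3::real))"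
      by (rule sum_mono) (rule no)
    then show ?thesis by simp
  qed
  have "real (t * M) \<le> 3 * real (4^q * M)"
    using main s1 s2 cO by simp
  then have "t * M \<le> 3 * 4^q * M" by (simp only: of_nat_mult[symmetric] of_nat_le_iff of_nat_numeral mult.assoc)
  then have "t \<le> 3 * 4^q" using Mpos by simp
  then show False unfolding t_def by simp
qed

end
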